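(* Let $N\ge 1$ and $L\ge 1$ be integers and let $f_c>0$, $B>0$. For $\phi\in[-\pi/2,\pi/2]$, $f\in[-B/2,B/2]$ and a vector $\mathbf{w}\in\mathbb{C}^N$, define the beam gain $$g(f,\phi,\mathbf{w})=\big|\mathbf{h}(f,\phi)^H\mathbf{w}\big|^2,\qquad \mathbf{h}(f,\phi)=\big[1,e^{j\pi(1+\frac{f}{f_c})\sin\phi},\dots,e^{j(N-1)\pi(1+\frac{f}{f_c})\sin\phi}\big]^T,$$ the wideband beam gain $G(\phi,\mathbf{w})=\min_{f\in[-B/2,B/2]}g(f,\phi,\mathbf{w})$, and for a codebook $\mathcal{W}=\{\mathbf{w}_1,\dots,\mathbf{w}_L\}$ the worst-case performance $$\Gamma_{\rm worst}(\mathcal{W})=\min_{\phi\in[-\pi/2,\pi/2]}\ \max_{l\in\{1,\dots,L\}}\ G(\phi,\mathbf{w}_l).$$ Let $\mathcal{W}^{\rm nar}=\{\mathbf{w}^{\rm nar}_1,\dots,\mathbf{w}^{\rm nar}_L\}$ be the narrowband codebook $$\mathbf{w}^{\rm nar}_l=\tfrac{1}{\sqrt N}\big[1,e^{j\pi\sin\phi_l},\dots,e^{j(N-1)\pi\sin\phi_l}\big]^T,\qquad \phi_l=\arcsin\!\Big(\tfrac{2l-1}{L}-1\Big),\ l=1,\dots,L.$$ Then $$\Gamma_{\rm worst}(\mathcal{W}^{\rm nar})=\begin{cases}\left[\dfrac{\sin\big(N\pi(2f_c+BL)/(4f_cL)\big)}{\sqrt N\,\sin\big(\pi(2f_c+BL)/(4f_cL)\big)}\right]^2,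 & \text{if } N<\dfrac{4f_cL}{2f_c+BL},\\[2mm] 0, & \text{otherwise},\end{cases}$$ and this worst case is attained when the AoD is $\phi=\pm\pi/2$. In particular, a necessary condition for $\Gamma_{\rm worst}(\mathcal{W}^{\rm nar})>0$ is $\dfrac{B}{f_c}<\dfrac{4}{N}$.
   Context: Setting: a uniform linear array of $N$ antennas with half-wavelength spacing at the central frequency $f_c$ transmits a signal of bandwidth $B$ with a frequency-flat analog beamformer; $f\in[-B/2,B/2]$ is the baseband frequency offset from $f_c$, $\phi$ is the angle of departure (AoD), and $j$ is the imaginary unit. The paper considers this narrowband codebook with $L\ge N$ beams. *)

theory Defs
  imports "HOL-Analysis.Analysis"
begin

text \<open>Vectors in C^N are represented as functions nat => complex, indexed by n = 0..N-1.\<close>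

definition steer :: "real \<Rightarrow> real \<Rightarrow> real \<Rightarrow> nat \<Rightarrow> complex" where
  "steer fc f \<phi> n = cis (real n * pi * (1 + f / fc) * sin \<phi>)"

definition beam_gain :: "nat \<Rightarrow> real \<Rightarrow> real \<Rightarrow> real \<Rightarrow> (nat \<Rightarrow> complex) \<Rightarrow> real" where
  "beam_gain N fc f \<phi> w = (cmod (\<Sum>n<N. cnj (steer fc f \<phi> n) * w n))\<^sup>2"

definition wb_gain :: "nat \<Rightarrow> real \<Rightarrow> real \<Rightarrow> real \<Rightarrow> (nat \<Rightarrow> complex) \<Rightarrow> real" where
  "wb_gain N fc B \<phi> w = (INF f\<in>{-B/2..B/2}. beam_gain N fc f \<phi> w)"

definition gamma_worst :: "nat \<Rightarrow> nat \<Rightarrow> real \<Rightarrow> real \<Rightarrow> (nat \<Rightarrow> nat \<Rightarrow> complex) \<Rightarrow> real" where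
  "gamma_worst N L fc B W =
     (INF \<phi>\<in>{-pi/2..pi/2}. Max ((\<lambda>l. wb_gain N fc B \<phi> (W l)) ` {1..L}))"

definition nar_angle :: "nat \<Rightarrow> nat \<Rightarrow> real" where
  "nar_angle L l = arcsin ((2 * real l - 1) / real L - 1)"

definition nar_codebook :: "nat \<Rightarrow> nat \<Rightarrow> nat \<Rightarrow> nat \<Rightarrow> complex" where
  "nar_codebook N L l n = complex_of_real (1 / sqrt (real N)) * cis (real n * pi * sin (nar_angle L l))"

end

theory Submission
  imports Defs
begin


definition S :: "nat \<Rightarrow> real \<Rightarrow> complex" where
  "S N x = (\<Sum>n<N. cis (real n * x))"

definition Kf :: "nat \<Rightarrow> real \<Rightarrow> real" where
  "Kf N x = (cmod (S N x))\<^sup>2"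

lemma cmod_cis_minus_1_sq: "(cmod (cis t - 1))\<^sup>2 = 4 * (sin (t/2))\<^sup>2"
proof -
  have "(cmod (cis t - 1))\<^sup>2 = (cos t - 1)\<^sup>2 + (sin t)\<^sup>2"
    by (simp add: cmod_power2 cis.ctr)
  also have "\<dots> = 2 - 2 * cos t" using sin_cos_squared_add[of t]
    by (simp add: power2_eq_square algebra_simps)
  also have "cos t = 1 - 2 * (sin (t/2))\<^sup>2" using cos_double_sin[of "t/2"] by simp
  finally show ?thesis by simp
qed

lemma Kf_closed: "Kf N x * (sin (x/2))\<^sup>2 = (sin (real N * x / 2))\<^sup>2"
proof -
  have "cis (real N * x) - 1 = (cis x - 1) * S N x"
  proof -
    have "S N x = (\<Sum>n<N. cis x ^ n)" unfolding S_def by (intro sum.cong) (auto simp: Complex.DeMoivre[symmetric])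
    thus ?thesis using power_diff_1_eq[of "cis x" N] by (simp add: Complex.DeMoivre)
  qed
  hence "(cmod (cis (real N * x) - 1))\<^sup>2 = (cmod (cis x - 1))\<^sup>2 * (cmod (S N x))\<^sup>2"
    by (simp add: norm_mult power_mult_distrib)
  thus ?thesis unfolding Kf_def cmod_cis_minus_1_sq by simp
qed

lemma Kf_nonneg: "Kf N x \<ge> 0" unfolding Kf_def by simp

lemma Kf_zero: "Kf N 0 = (real N)\<^sup>2"
  unfolding Kf_def S_def by simp

lemma Kf_uminus: "Kf N (-x) = Kf N x"
proof -
  have "S N (-x) = cnj (S N x)" unfolding S_def by (simp add: cis_cnj)
  thus ?thesis unfolding Kf_def by simp
qed

lemma Kf_2pi_minus: "Kf N (2*pi - x) = Kf N x"
proof -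
  have "cis (real n * (2*pi - x)) = cis (real n * (-x))" for n
  proof -
    have "cis (real n * (2*pi - x)) = cis (2 * real n * pi) * cis (real n * (-x))"
      by (simp add: cis_mult algebra_simps)
    also have "cis (2 * real n * pi) = 1" by (simp add: cis.ctr cos_2npi sin_2npi complex_eq_iff)
    finally show ?thesis by simp
  qed
  hence "S N (2*pi - x) = S N (-x)" unfolding S_def by simp
  thus ?thesis using Kf_uminus unfolding Kf_def by metis
qed

lemma Kf_abs: "Kf N \<bar>x\<bar> = Kf N x"
  by (cases "x \<ge> 0") (auto simp: Kf_uminus)

lemma abs_sin_mult_le: "\<bar>sin (real n * x)\<bar> \<le> real n * \<bar>sin x\<bar>"
proof (induction n)
  case 0 then show ?case by simp
next
  case (Suc n)
  have "sin (real (Suc n) * x) = sin (real n * x) * cos x + cos (real n * x) * sin x"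
    by (simp add: distrib_right sin_add)
  hence "\<bar>sin (real (Suc n) * x)\<bar> \<le> \<bar>sin (real n * x)\<bar> * \<bar>cos x\<bar> + \<bar>cos (real n * x)\<bar> * \<bar>sin x\<bar>"
    by (simp add: abs_mult[symmetric] abs_triangle_ineq)
  also have "\<dots> \<le> \<bar>sin (real n * x)\<bar> + \<bar>sin x\<bar>"
    by (intro add_mono mult_le_one) (auto intro: mult_right_le_one_le abs_cos_le_one mult_left_le_one_le)
  also have "\<dots> \<le> real (Suc n) * \<bar>sin x\<bar>" using Suc by (simp add: algebra_simps)
  finally show ?case .
qed



lemma h_nonpos:
  assumes "N \<ge> 1" "0 \<le> y" "y \<le> pi / real N"
  shows "real N * cos (real N * y) * sin y - sin (real N * y) * cos y \<le> 0"
proof -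
  let ?h = "\<lambda>t. real N * cos (real N * t) * sin t - sin (real N * t) * cos t"
  have "?h y \<le> ?h 0"
  proof (rule DERIV_nonpos_imp_nonincreasing[OF assms(2)])
    fix t assume t: "0 \<le> t" "t \<le> y"
    have d: "(?h has_real_derivative (1 - (real N)\<^sup>2) * (sin (real N * t) * sin t)) (at t)"
      by (auto intro!: derivative_eq_intros simp: power2_eq_square algebra_simps)
    have Npos: "real N > 0" using assms by simp
    have "real N * y \<le> pi" using assms(3) Npos by (simp add: field_simps)
    moreover have "real N * t \<le> real N * y" using t by (intro mult_left_mono) auto
    ultimately have "real N * t \<le> pi" by linarith
    hence "sin (real N * t) \<ge> 0" using t Npos by (intro sin_ge_zero) auto
    moreover have "1 * t \<le> real N * t" using t assms(1) by (intro mult_right_mono) auto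
    hence "t \<le> pi" using \<open>real N * t \<le> pi\<close> by linarith
    hence "sin t \<ge> 0" using t by (intro sin_ge_zero) auto
    moreover have "1 - (real N)\<^sup>2 \<le> 0" using assms(1)
      using one_le_power[of "real N" 2] by simp
    ultimately show "\<exists>d. (?h has_real_derivative d) (at t) \<and> d \<le> 0"
      using d by (intro exI[of _ "(1 - (real N)\<^sup>2) * (sin (real N * t) * sin t)"])
        (auto intro: mult_nonpos_nonneg)
  qed
  thus ?thesis by simp
qed

lemma u_decr:
  assumes "N \<ge> 2" "0 < y1" "y1 \<le> y2" "y2 \<le> pi / real N"
  shows "sin (real N * y2) / sin y2 \<le> sin (real N * y1) / sin y1"
proof -
  let ?u = "\<lambda>t. sin (real N * t) / sin t"
  have Npos: "real N \<ge> 2" using assms by simp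
  have piN: "pi / real N \<le> pi / 2" using Npos by (intro divide_left_mono) auto
  show ?thesis
  proof (rule DERIV_nonpos_imp_nonincreasing[OF assms(3), of ?u])
    fix t assume t: "y1 \<le> t" "t \<le> y2"
    have t0: "0 < t" "t \<le> pi/2" using t assms(2,4) piN by linarith+
    have st: "sin t > 0" using t0 by (intro sin_gt_zero) auto
    have d: "(?u has_real_derivative
       (real N * cos (real N * t) * sin t - sin (real N * t) * cos t) / (sin t * sin t)) (at t)"
      using st by (auto intro!: derivative_eq_intros simp: algebra_simps)
    have "real N * cos (real N * t) * sin t - sin (real N * t) * cos t \<le> 0"
      using t assms by (intro h_nonpos) auto
    hence "(real N * cos (real N * t) * sin t - sin (real N * t) * cos t) / (sin t * sin t) \<le> 0"
      by (simp add: divide_nonpos_pos st)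
    thus "\<exists>d. (?u has_real_derivative d) (at t) \<and> d \<le> 0" using d by blast
  qed
qed



lemma Kf_eq:
  assumes "sin (x/2) \<noteq> 0"
  shows "Kf N x = (sin (real N * x / 2) / sin (x/2))\<^sup>2"
  using Kf_closed[of N x] assms by (simp add: power_divide field_simps)

lemma Kf_mono:
  assumes "N \<ge> 2" "0 \<le> x1" "x1 \<le> x2" "x2 \<le> 2 * pi / real N"
  shows "Kf N x2 \<le> Kf N x1"
proof (cases "x2 = 0")
  case True then show ?thesis using assms by simp
next
  case False
  have N2: "real N \<ge> 2" using assms by simp
  have "2 * pi / real N \<le> 2 * pi / 2" using N2 by (intro divide_left_mono) auto
  hence x2pi: "x2 \<le> pi" using assms by simp
  have x2pos: "x2 > 0" using False assms by simp
  have s2: "sin (x2/2) > 0" using x2pos x2pi by (intro sin_gt_zero) auto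
  have e2: "real N * x2 / 2 = real N * (x2/2)" by simp
  have "real N * x2 \<le> 2 * pi" using assms(4) N2 by (simp add: field_simps)
  hence num2: "sin (real N * x2 / 2) \<ge> 0" using x2pos by (intro sin_ge_zero) auto
  show ?thesis
  proof (cases "x1 = 0")
    case True
    have "\<bar>sin (real N * (x2/2))\<bar> \<le> real N * \<bar>sin (x2/2)\<bar>" by (rule abs_sin_mult_le)
    hence "sin (real N * x2 / 2) / sin (x2/2) \<le> real N" using s2 num2 by (simp add: divide_le_eq)
    moreover have "0 \<le> sin (real N * x2 / 2) / sin (x2/2)" using s2 num2 by simp
    ultimately have "(sin (real N * x2 / 2) / sin (x2/2))\<^sup>2 \<le> (real N)\<^sup>2"
      by (intro power_mono) auto
    thus ?thesis using True Kf_eq[of x2 N] s2 by (simp add: Kf_zero)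
  next
    case False
    have x1pos: "x1 > 0" using False assms by simp
    have s1: "sin (x1/2) > 0" using x1pos x2pi assms by (intro sin_gt_zero) auto
    have "sin (real N * (x2/2)) / sin (x2/2) \<le> sin (real N * (x1/2)) / sin (x1/2)"
      using assms x1pos by (intro u_decr) (auto simp: divide_simps)
    moreover have "0 \<le> sin (real N * x2 / 2) / sin (x2/2)" using s2 num2 by simp
    ultimately have "(sin (real N * x2 / 2) / sin (x2/2))\<^sup>2 \<le> (sin (real N * x1 / 2) / sin (x1/2))\<^sup>2"
      by (intro power_mono) auto
    thus ?thesis using Kf_eq[of x2 N] Kf_eq[of x1 N] s1 s2 by simp
  qed
qed

lemma Kf_null:
  fixes j :: int
  assumes "N \<ge> 1" "0 < j" "j < int N"
  shows "Kf N (pi * (2 * of_int j / real N)) = 0"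
proof -
  have Npos: "real N > 0" using assms by simp
  have "pi * (2 * of_int j / real N) / 2 = pi * (of_int j / real N)" by simp
  moreover have "0 < of_int j / real N" "of_int j / real N < 1"
    using assms Npos by (auto simp: field_simps)
  moreover have "0 < pi * (of_int j / real N)" "pi * (of_int j / real N) < pi * 1"
    using calculation(2,3) by (intro mult_pos_pos mult_strict_left_mono; simp)+
  ultimately have "sin (pi * (2 * of_int j / real N) / 2) > 0"
    by (metis sin_gt_zero mult_1_right)
  moreover have "sin (real N * (pi * (2 * of_int j / real N)) / 2) = 0"
  proof -
    have "real N * (pi * (2 * of_int j / real N)) / 2 = of_int j * pi" using Npos by simp
    thus ?thesis by (simp add: sin_times_pi_eq_0)
  qed
  ultimately show ?thesis using Kf_closed[of N "pi * (2 * of_int j / real N)"] by simp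
qed

lemma Kf_le_inv:
  assumes "sin (x/2) \<noteq> 0"
  shows "Kf N x \<le> 1 / (sin (x/2))\<^sup>2"
proof -
  have "(sin (real N * x / 2))\<^sup>2 \<le> 1" by (simp add: abs_sin_le_one abs_square_le_1)
  thus ?thesis using Kf_eq[OF assms, of N] assms
    by (simp add: power_divide divide_right_mono)
qed



lemma sin_between:
  assumes "0 < a" "a \<le> x" "x \<le> pi - a"
  shows "sin a \<le> sin x"
proof (cases "x \<le> pi/2")
  case True
  thus ?thesis using assms by (subst sin_mono_le_eq) auto
next
  case False
  have "sin x = sin (pi - x)" by simp
  moreover have "sin a \<le> sin (pi - x)" using assms False by (subst sin_mono_le_eq) auto
  ultimately show ?thesis by simp
qed

lemma abs_sin_pi_int:
  fixes j :: int
  shows "\<bar>sin (pi * D)\<bar> = \<bar>sin (pi * (D - of_int j))\<bar>"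
proof -
  have s0: "sin (of_int j * pi) = 0" by (simp add: sin_times_pi_eq_0)
  hence "(cos (of_int j * pi))\<^sup>2 = 1" using sin_cos_squared_add[of "of_int j * pi"] by simp
  hence c1: "\<bar>cos (of_int j * pi)\<bar> = 1" by (metis abs_neg_one abs_one power2_eq_1_iff)
  have "sin (pi * D) = sin (pi * (D - of_int j) + of_int j * pi)" by (simp add: algebra_simps)
  also have "\<dots> = sin (pi * (D - of_int j)) * cos (of_int j * pi)" by (simp add: sin_add s0)
  finally show ?thesis using c1 by (simp add: abs_mult)
qed

lemma num_bound:
  fixes j :: int
  assumes "\<bar>D - of_int j\<bar> \<le> 1 - q" "1/2 \<le> q" "q \<le> 1"
  shows "(sin (pi * D))\<^sup>2 \<le> (sin (pi * q))\<^sup>2"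
proof -
  let ?t = "\<bar>D - of_int j\<bar>"
  have "\<bar>sin (pi * D)\<bar> = \<bar>sin (pi * (D - of_int j))\<bar>" by (rule abs_sin_pi_int)
  also have "\<dots> = sin (pi * ?t)"
  proof (cases "D - of_int j \<ge> 0")
    case True
    have "pi * (D - of_int j) \<le> pi * 1" using True assms by (intro mult_left_mono) auto
    hence "sin (pi * (D - of_int j)) \<ge> 0" using True by (intro sin_ge_zero) auto
    thus ?thesis using True by simp
  next
    case False
    have "pi * ?t \<le> pi * 1" using assms by (intro mult_left_mono) auto
    hence "sin (pi * ?t) \<ge> 0" by (intro sin_ge_zero) auto
    moreover have "?t = -(D - of_int j)" using False by simp
    hence "sin (pi * (D - of_int j)) = - sin (pi * ?t)"
      by (metis minus_minus mult_minus_right sin_minus)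
    ultimately show ?thesis by simp
  qed
  also have "\<dots> \<le> sin (pi * (1 - q))"
  proof -
    have a: "pi * ?t \<le> pi * (1 - q)" using assms(1) by (intro mult_left_mono) auto
    have b: "pi * (1 - q) \<le> pi * (1/2)" using assms(2) by (intro mult_left_mono) auto
    have c: "0 \<le> pi * ?t" by simp
    have d: "0 \<le> pi * (1 - q)" using c a by linarith
    show ?thesis using a b c d pi_gt_zero by (subst sin_mono_le_eq; linarith)
  qed
  also have "sin (pi * (1 - q)) = sin (pi * q)" by (simp add: algebra_simps sin_diff)
  finally have "\<bar>sin (pi * D)\<bar> \<le> sin (pi * q)" .
  hence "\<bar>sin (pi * D)\<bar>\<^sup>2 \<le> (sin (pi * q))\<^sup>2" by (intro power_mono) auto
  thus ?thesis by simp
qed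



lemma half_sin:
  fixes t :: real
  assumes "0 < t" "t \<le> pi/2"
  shows "sin (t/2) \<le> sin t" "0 < sin (t/2)" "0 < sin t"
proof -
  show "sin (t/2) \<le> sin t" using assms by (subst sin_mono_le_eq) auto
  show "0 < sin (t/2)" using assms by (intro sin_gt_zero) auto
  show "0 < sin t" using assms by (intro sin_gt_zero) auto
qed

lemma low_main:
  assumes N2: "N \<ge> 2" and LN: "L \<ge> N" and hpos: "h > 0"
    and main: "1 / real L + h < 2 / real N" and c1: "1 / real L \<le> c" and c2: "c \<le> 1"
  shows "\<exists>d. c - h \<le> d \<and> d \<le> c + h \<and> Kf N (pi * d) \<le> Kf N (pi * (1 / real L + h))"
proof -
  define \<delta> where "\<delta> = 1 / real L + h"
  have rN: "real N \<ge> 2" using N2 by simp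
  have rL: "real L \<ge> real N" using LN by simp
  have iLN: "1 / real L \<le> 1 / real N" using rN rL by (intro divide_left_mono) auto
  have iL0: "1 / real L > 0" using rN rL by simp
  have iN2: "1 / real N \<le> 1/2" using rN by simp
  have dpos: "\<delta> > 0" using iL0 hpos \<delta>_def by linarith
  have dlt: "\<delta> < 2 / real N" using main \<delta>_def by simp
  have pi_div: "pi * (2 / real N) = 2 * pi / real N" by simp
  show ?thesis
  proof (cases "c + h \<le> 2 / real N")
    case True
    have "Kf N (pi * (c + h)) \<le> Kf N (pi * \<delta>)"
    proof (rule Kf_mono[OF N2])
      show "0 \<le> pi * \<delta>" using dpos by simp
      show "pi * \<delta> \<le> pi * (c + h)" using c1 \<delta>_def by (intro mult_left_mono) auto
      have "pi * (c + h) \<le> pi * (2 / real N)" using True by (intro mult_left_mono) auto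
      thus "pi * (c + h) \<le> 2 * pi / real N" by (simp only: pi_div)
    qed
    thus ?thesis using hpos \<delta>_def by (intro exI[of _ "c + h"]) auto
  next
    case F1: False
    show ?thesis
    proof (cases "c - h \<le> 2 / real N")
      case True
      have "Kf N (pi * (2 * of_int 1 / real N)) = 0" using N2 by (intro Kf_null) auto
      hence "Kf N (pi * (2 / real N)) \<le> Kf N (pi * \<delta>)" using Kf_nonneg[of N "pi * \<delta>"] by simp
      thus ?thesis using True F1 \<delta>_def by (intro exI[of _ "2 / real N"]) auto
    next
      case F2: False
      show ?thesis
      proof (cases "\<delta> \<le> 1 / real N")
        case True
        define d where "d = c - h"
        have d1: "2 / real N < d" using F2 d_def by simp
        have d2: "d \<le> 1" using c2 hpos d_def by simp
        have a1: "pi / real N \<le> pi / 2" using rN by (intro divide_left_mono) auto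
        have "pi * (2 / real N) < pi * d" using d1 by (intro mult_strict_left_mono) auto
        hence A: "pi * (2 / real N) / 2 < pi * d / 2" by (rule divide_strict_right_mono) simp
        have eq: "pi / real N = pi * (2 / real N) / 2" by simp
        have a2: "pi / real N < pi * d / 2" by (subst eq) (rule A)
        have a3: "pi * d / 2 \<le> pi / 2" using d2 by simp
        have a4: "0 < pi / real N" using rN by simp
        have sN: "sin (pi / real N) > 0" using a4 a1 pi_gt_zero by (intro sin_gt_zero; linarith)
        have sd: "sin (pi / real N) \<le> sin (pi * d / 2)"
          using a1 a2 a3 a4 pi_gt_zero by (subst sin_mono_le_eq; linarith)
        have s2N: "sin (pi / real N / 2) \<le> sin (pi / real N)"
          using half_sin[OF a4 a1] by simp
        have s2N0: "sin (pi / real N / 2) > 0" using half_sin[OF a4 a1] by simp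
        have "Kf N (pi * d) \<le> 1 / (sin (pi * d / 2))\<^sup>2"
          using Kf_le_inv[of "pi * d" N] sN sd by simp
        also have "\<dots> \<le> 1 / (sin (pi / real N))\<^sup>2"
          using sN sd by (intro divide_left_mono power_mono mult_pos_pos) auto
        also have "\<dots> \<le> 1 / (sin (pi / real N / 2))\<^sup>2"
          using s2N s2N0 by (intro divide_left_mono power_mono mult_pos_pos) auto
        also have "\<dots> = Kf N (pi / real N)"
        proof -
          have "real N * (pi / real N) / 2 = pi / 2" using rN by simp
          thus ?thesis using Kf_eq[of "pi / real N" N] s2N0 by (simp add: power_divide)
        qed
        also have "\<dots> \<le> Kf N (pi * \<delta>)"
        proof (rule Kf_mono[OF N2])
          show "0 \<le> pi * \<delta>" using dpos by simp
          have "pi * \<delta> \<le> pi * (1 / real N)" using True by (intro mult_left_mono) auto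
          thus "pi * \<delta> \<le> pi / real N" by simp
          show "pi / real N \<le> 2 * pi / real N" using rN by (simp add: divide_right_mono)
        qed
        finally show ?thesis using hpos d_def \<delta>_def by (intro exI[of _ d]) auto
      next
        case F3: False
        have N3: "N \<ge> 3"
        proof (rule ccontr)
          assume "\<not> N \<ge> 3"
          hence "N = 2" using N2 by simp
          thus False using F2 c2 hpos by simp
        qed
        have iN3: "1 / real N \<le> 1 / 3" using N3 by (simp add: divide_simps)
        have iN2': "2 / real N = 2 * (1 / real N)" by simp
        define C where "C = real N * c / 2"
        define j where "j = round C"
        have jC: "\<bar>of_int j - C\<bar> \<le> 1/2" unfolding j_def by (rule of_int_round_abs_le)
        define p where "p = 2 * of_int j / real N"
        have pc_eq: "p - c = (of_int j - C) * (2 / real N)" using rN by (simp add: p_def C_def field_simps)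
        have "\<bar>p - c\<bar> = \<bar>of_int j - C\<bar> * (2 / real N)" unfolding pc_eq abs_mult using rN by simp
        also have "\<dots> \<le> 1/2 * (2 / real N)" using jC rN by (intro mult_right_mono) auto
        finally have pc: "\<bar>p - c\<bar> \<le> 1 / real N" by simp
        define d where "d = max (c - h) (min (c + h) p)"
        have dint: "c - h \<le> d" "d \<le> c + h" using hpos unfolding d_def by auto
        have pcl: "p - c \<le> 1 / real N" "c - p \<le> 1 / real N" using pc by linarith+
        have dp_dc: "\<bar>d - p\<bar> \<le> 2 / real N - \<delta> \<and> d \<le> c + 1 / real N"
        proof -
          consider (a) "p \<le> c - h" | (b) "c + h \<le> p" | (c) "c - h < p" "p < c + h" by linarith
          thus ?thesis
          proof cases
            case a
            hence "d = c - h" using hpos unfolding d_def by (simp add: min_def max_def)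
            moreover have "\<bar>c - h - p\<bar> = c - h - p" using a by simp
            ultimately show ?thesis using a pcl iLN \<delta>_def iN2' hpos by simp
          next
            case b
            hence "d = c + h" using hpos unfolding d_def by (simp add: min_def max_def)
            moreover have "\<bar>c + h - p\<bar> = p - c - h" using b by simp
            ultimately show ?thesis using b pcl iLN \<delta>_def iN2' hpos by simp
          next
            case c
            hence "d = p" unfolding d_def by (simp add: min_def max_def)
            thus ?thesis using pcl dlt by simp
          qed
        qed
        hence dp: "\<bar>d - p\<bar> \<le> 2 / real N - \<delta>" and dc: "d \<le> c + 1 / real N" by auto
        have dlo: "\<delta> \<le> d" using dint F2 dlt by linarith
        have dhi: "d \<le> 2 - \<delta>" using dc c2 iN3 dlt iN2' by linarith
        define D where "D = real N * d / 2"
        define q where "q = real N * \<delta> / 2"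
        have "D - of_int j = (real N / 2) * (d - p)" using rN by (simp add: D_def p_def field_simps)
        hence "\<bar>D - of_int j\<bar> = \<bar>(real N / 2) * (d - p)\<bar>" by (rule arg_cong)
        also have "\<dots> = (real N / 2) * \<bar>d - p\<bar>" by (simp add: abs_mult)
        also have "\<dots> \<le> (real N / 2) * (2 / real N - \<delta>)" using dp by (intro mult_left_mono) auto
        also have "\<dots> = 1 - q" using rN by (simp add: q_def field_simps)
        finally have Dj: "\<bar>D - of_int j\<bar> \<le> 1 - q" .
        have q1: "1/2 \<le> q" using F3 rN by (simp add: q_def field_simps)
        have q2: "q \<le> 1" using dlt rN by (simp add: q_def field_simps)
        have num: "(sin (pi * D))\<^sup>2 \<le> (sin (pi * q))\<^sup>2" by (rule num_bound[OF Dj q1 q2])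
        have b1: "0 < pi * \<delta> / 2" using dpos by simp
        have b2: "pi * \<delta> / 2 \<le> pi * d / 2" using dlo by (simp add: mult_left_mono)
        have "pi * d \<le> pi * (2 - \<delta>)" using dhi by (intro mult_left_mono) auto
        hence b3: "pi * d / 2 \<le> pi - pi * \<delta> / 2" by (simp add: algebra_simps)
        have den: "sin (pi * \<delta> / 2) \<le> sin (pi * d / 2)" by (rule sin_between[OF b1 b2 b3])
        have "\<delta> < 2" using dlt rN iN2 iN2' by linarith
        hence "pi * \<delta> < pi * 2" by simp
        hence den0: "sin (pi * \<delta> / 2) > 0" using b1 by (intro sin_gt_zero) auto
        have e1: "Kf N (pi * d) = (sin (pi * D))\<^sup>2 / (sin (pi * d / 2))\<^sup>2"
          using Kf_eq[of "pi * d" N] den den0 by (simp add: D_def power_divide mult.commute mult.left_commute)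
        have e2: "Kf N (pi * \<delta>) = (sin (pi * q))\<^sup>2 / (sin (pi * \<delta> / 2))\<^sup>2"
          using Kf_eq[of "pi * \<delta>" N] den0 by (simp add: q_def power_divide mult.commute mult.left_commute)
        have "Kf N (pi * d) \<le> Kf N (pi * \<delta>)" unfolding e1 e2
        proof (rule frac_le[OF _ num])
          show "(sin (pi * \<delta> / 2))\<^sup>2 \<le> (sin (pi * d / 2))\<^sup>2" using den den0 by (intro power_mono) auto
        qed (use den0 in auto)
        thus ?thesis using dint \<delta>_def by (intro exI[of _ d]) auto
      qed
    qed
  qed
qed

lemma low_zero:
  assumes N2: "N \<ge> 2" and LN: "L \<ge> N" and hpos: "h > 0"
    and nm: "2 / real N \<le> 1 / real L + h" and c1: "1 / real L \<le> c" and c2: "c \<le> 1"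
  shows "\<exists>d. c - h \<le> d \<and> d \<le> c + h \<and> Kf N (pi * d) = 0"
proof -
  have rN: "real N \<ge> 2" using N2 by simp
  have rL: "real L \<ge> real N" using LN by simp
  have iLN: "1 / real L \<le> 1 / real N" using rN rL by (intro divide_left_mono) auto
  have iN2': "2 / real N = 2 * (1 / real N)" by simp
  show ?thesis
  proof (cases "c - h \<le> 2 / real N")
    case True
    have "Kf N (pi * (2 * of_int 1 / real N)) = 0" using N2 by (intro Kf_null) auto
    thus ?thesis using True nm c1 by (intro exI[of _ "2 / real N"]) auto
  next
    case False
    have hN: "1 / real N \<le> h" using nm iLN iN2' by linarith
    define C where "C = real N * c / 2"
    define j where "j = round C"
    have jC: "\<bar>of_int j - C\<bar> \<le> 1/2" unfolding j_def by (rule of_int_round_abs_le)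
    define p where "p = 2 * of_int j / real N"
    have pc_eq: "p - c = (of_int j - C) * (2 / real N)" using rN by (simp add: p_def C_def field_simps)
    have "\<bar>p - c\<bar> = \<bar>of_int j - C\<bar> * (2 / real N)" unfolding pc_eq abs_mult using rN by simp
    also have "\<dots> \<le> 1/2 * (2 / real N)" using jC rN by (intro mult_right_mono) auto
    finally have pc: "\<bar>p - c\<bar> \<le> 1 / real N" by simp
    have pl: "2 / real N < p" "p \<le> c + 1 / real N" using pc False hN by linarith+
    have "0 < j"
    proof -
      have "0 < p" using pl rN by (smt (verit) divide_pos_pos)
      thus ?thesis using rN by (simp add: p_def divide_simps)
    qed
    moreover have "j < int N"
    proof -
      have "1 / real N \<le> 1/2" using rN by simp
      hence "p < 2" using pl c2 by linarith
      hence "2 * of_int j < 2 * real N" using rN by (simp add: p_def divide_simps)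
      thus ?thesis by linarith
    qed
    ultimately have "Kf N (pi * (2 * of_int j / real N)) = 0" using N2 by (intro Kf_null) auto
    thus ?thesis using pc hN by (intro exI[of _ p]) (auto simp: p_def[symmetric] abs_le_iff)
  qed
qed

lemma low_any:
  assumes N2: "N \<ge> 2" and LN: "L \<ge> N" and hpos: "h > 0"
    and c1: "1 / real L \<le> c" and c2: "c \<le> 2 - 1 / real L"
  shows "\<exists>d. c - h \<le> d \<and> d \<le> c + h \<and>
    Kf N (pi * d) \<le> (if 1 / real L + h < 2 / real N then Kf N (pi * (1 / real L + h)) else 0)"
proof -
  have gen: "\<exists>d. c' - h \<le> d \<and> d \<le> c' + h \<and>
    Kf N (pi * d) \<le> (if 1 / real L + h < 2 / real N then Kf N (pi * (1 / real L + h)) else 0)"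
    if "1 / real L \<le> c'" "c' \<le> 1" for c'
  proof (cases "1 / real L + h < 2 / real N")
    case True
    then show ?thesis using low_main[OF N2 LN hpos True that] by simp
  next
    case False
    then show ?thesis using low_zero[OF N2 LN hpos _ that] by force
  qed
  show ?thesis
  proof (cases "c \<le> 1")
    case True
    then show ?thesis using gen c1 by blast
  next
    case False
    obtain d' where d': "(2 - c) - h \<le> d'" "d' \<le> (2 - c) + h"
      "Kf N (pi * d') \<le> (if 1 / real L + h < 2 / real N then Kf N (pi * (1 / real L + h)) else 0)"
      using gen[of "2 - c"] c2 False by auto
    have "Kf N (pi * (2 - d')) = Kf N (pi * d')"
      using Kf_2pi_minus[of N "pi * d'"] by (simp add: algebra_simps)
    thus ?thesis using d' by (intro exI[of _ "2 - d'"]) auto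
  qed
qed



lemma sin_nar:
  assumes "1 \<le> l" "l \<le> L"
  shows "sin (nar_angle L l) = (2 * real l - 1) / real L - 1"
proof -
  have L0: "real L > 0" using assms by simp
  have "(2 * real l - 1) / real L \<ge> 0" using assms L0 by simp
  moreover have "(2 * real l - 1) / real L \<le> 2" using assms L0 by (simp add: divide_simps)
  ultimately show ?thesis unfolding nar_angle_def by (intro sin_arcsin) auto
qed

lemma gain_eq:
  assumes "N > 0"
  shows "beam_gain N fc f \<phi> (nar_codebook N L l) =
    Kf N (pi * (sin (nar_angle L l) - (1 + f / fc) * sin \<phi>)) / real N"
proof -
  define x where "x = pi * (sin (nar_angle L l) - (1 + f / fc) * sin \<phi>)"
  have "cnj (steer fc f \<phi> n) * nar_codebook N L l n =
        complex_of_real (1 / sqrt (real N)) * cis (real n * x)" for n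
  proof -
    have "cnj (steer fc f \<phi> n) * nar_codebook N L l n =
      complex_of_real (1 / sqrt (real N)) * (cis (real n * pi * sin (nar_angle L l)) *
        cis (- (real n * pi * (1 + f / fc) * sin \<phi>)))"
      unfolding steer_def nar_codebook_def cis_cnj by (simp add: ac_simps)
    also have "cis (real n * pi * sin (nar_angle L l)) * cis (- (real n * pi * (1 + f / fc) * sin \<phi>))
      = cis (real n * pi * sin (nar_angle L l) + - (real n * pi * (1 + f / fc) * sin \<phi>))"
      by (rule cis_mult)
    also have "real n * pi * sin (nar_angle L l) + - (real n * pi * (1 + f / fc) * sin \<phi>) = real n * x"
      unfolding x_def by (simp add: algebra_simps)
    finally show ?thesis .
  qed
  hence "(\<Sum>n<N. cnj (steer fc f \<phi> n) * nar_codebook N L l n) =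
         complex_of_real (1 / sqrt (real N)) * S N x"
    unfolding S_def by (simp add: sum_distrib_left)
  hence "beam_gain N fc f \<phi> (nar_codebook N L l) = (1 / sqrt (real N))\<^sup>2 * (cmod (S N x))\<^sup>2"
    unfolding beam_gain_def by (simp only: norm_mult power_mult_distrib norm_of_real abs_of_nonneg real_sqrt_ge_zero divide_nonneg_nonneg zero_le_one of_nat_0_le_iff abs_divide abs_one real_sqrt_abs2 abs_of_nat)
  also have "\<dots> = Kf N x / real N" using assms by (simp add: Kf_def power_divide)
  finally show ?thesis unfolding x_def .
qed

lemma beam_gain_nonneg: "beam_gain N fc f \<phi> w \<ge> 0"
  unfolding beam_gain_def by simp

lemma wb_le:
  assumes "f \<in> {-B/2..B/2}"
  shows "wb_gain N fc B \<phi> w \<le> beam_gain N fc f \<phi> w"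
  unfolding wb_gain_def
  by (rule cINF_lower[OF _ assms]) (auto intro!: bdd_belowI[of _ 0] beam_gain_nonneg)

lemma wb_ge:
  assumes "B > 0" "\<And>f. f \<in> {-B/2..B/2} \<Longrightarrow> V \<le> beam_gain N fc f \<phi> w"
  shows "V \<le> wb_gain N fc B \<phi> w"
  unfolding wb_gain_def using assms by (intro cINF_greatest) auto

lemma wb_nonneg:
  assumes "B > 0" shows "0 \<le> wb_gain N fc B \<phi> w"
  using assms by (intro wb_ge) (auto intro: beam_gain_nonneg)



theorem proposition1:
  fixes N L :: nat and fc B :: real
  assumes "N \<ge> 2" and "L \<ge> N" and "fc > 0" and "B > 0"
  shows "gamma_worst N L fc B (nar_codebook N L) =
           (if real N < 4 * fc * real L / (2 * fc + B * real L)
            then (sin (real N * pi * (2 * fc + B * real L) / (4 * fc * real L)) /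
                  (sqrt (real N) * sin (pi * (2 * fc + B * real L) / (4 * fc * real L))))\<^sup>2
            else 0)
       \<and> gamma_worst N L fc B (nar_codebook N L) =
           Max ((\<lambda>l. wb_gain N fc B (pi/2) (nar_codebook N L l)) ` {1..L})
       \<and> gamma_worst N L fc B (nar_codebook N L) =
           Max ((\<lambda>l. wb_gain N fc B (-pi/2) (nar_codebook N L l)) ` {1..L})
       \<and> (gamma_worst N L fc B (nar_codebook N L) > 0 \<longrightarrow> B / fc < 4 / real N)"
proof -
  note N2 = assms(1) and LN = assms(2) and fc0 = assms(3) and B0 = assms(4)
  define h where "h = B / (2 * fc)"
  define \<delta> where "\<delta> = 1 / real L + h"
  define V where "V = (if \<delta> < 2 / real N then Kf N (pi * \<delta>) / real N else 0)"
  define M where "M = (\<lambda>\<phi>. Max ((\<lambda>l. wb_gain N fc B \<phi> (nar_codebook N L l)) ` {1..L}))"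
  have rN: "real N \<ge> 2" using N2 by simp
  have rL: "real L \<ge> real N" using LN by simp
  have L0: "real L > 0" using rN rL by simp
  have N0: "N > 0" using N2 by simp
  have hpos: "h > 0" using fc0 B0 by (simp add: h_def)
  have iL0: "1 / real L > 0" using L0 by simp
  have dpos: "\<delta> > 0" using iL0 hpos \<delta>_def by linarith
  have fin: "finite ((\<lambda>l. wb_gain N fc B \<phi> (nar_codebook N L l)) ` {1..L})" for \<phi> by simp
  have ne: "(\<lambda>l. wb_gain N fc B \<phi> (nar_codebook N L l)) ` {1..L} \<noteq> {}" for \<phi>
    using L0 by auto
  have lower: "V \<le> M \<phi>" if \<phi>: "\<phi> \<in> {-pi/2..pi/2}" for \<phi>
  proof (cases "\<delta> < 2 / real N")
    case False
    hence "V = 0" by (simp add: V_def)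
    moreover have "0 \<le> wb_gain N fc B \<phi> (nar_codebook N L 1)" using B0 by (rule wb_nonneg)
    moreover have "wb_gain N fc B \<phi> (nar_codebook N L 1) \<le> M \<phi>"
      unfolding M_def using L0 by (intro Max_ge fin) auto
    ultimately show ?thesis by linarith
  next
    case True
    hence V: "V = Kf N (pi * \<delta>) / real N" by (simp add: V_def)
    define s where "s = sin \<phi>"
    have s1: "-1 \<le> s" "s \<le> 1" unfolding s_def by auto
    obtain l where l: "1 \<le> l" "l \<le> L" "\<bar>(2 * real l - 1) / real L - 1 - s\<bar> \<le> 1 / real L"
    proof (cases "s = -1")
      case True
      show ?thesis using L0 True by (intro that[of 1]) (auto simp: divide_simps)
    next
      case False
      define x where "x = real L * (1 + s) / 2"
      have x0: "x > 0" using False s1 L0 by (simp add: x_def)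
      have xL: "x \<le> real L" using s1 L0 by (simp add: x_def)
      define k where "k = nat (ceiling x)"
      have k1: "real k \<ge> x" "real k < x + 1" using x0 unfolding k_def
        by (simp_all add: ceiling_correct) (linarith)
      have "0 < real_of_int (ceiling x)" using x0 le_of_int_ceiling[of x] by linarith
      hence "0 < ceiling x" by simp
      hence k1': "1 \<le> k" unfolding k_def by linarith
      have kL: "k \<le> L" using xL unfolding k_def by (simp add: ceiling_le_iff nat_le_iff)
      have "(2 * real k - 1) / real L - 1 - s = (2 * real k - 1 - 2 * x) / real L"
        using L0 by (simp add: x_def field_simps)
      moreover have "\<bar>2 * real k - 1 - 2 * x\<bar> \<le> 1" using k1 by linarith
      ultimately have "\<bar>(2 * real k - 1) / real L - 1 - s\<bar> \<le> 1 / real L"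
        using L0 by (simp add: abs_divide divide_right_mono)
      thus ?thesis using k1' kL by (intro that[of k]) auto
    qed
    have "V \<le> wb_gain N fc B \<phi> (nar_codebook N L l)"
    proof (rule wb_ge[OF B0])
      fix f assume f: "f \<in> {-B/2..B/2}"
      define a where "a = sin (nar_angle L l) - (1 + f / fc) * s"
      have "\<bar>f / fc\<bar> \<le> h" using f fc0 by (auto simp: h_def abs_divide divide_simps)
      moreover have "\<bar>s\<bar> \<le> 1" using s1 by simp
      ultimately have "\<bar>f / fc\<bar> * \<bar>s\<bar> \<le> h * 1" using hpos by (intro mult_mono) auto
      hence "\<bar>(f / fc) * s\<bar> \<le> h" by (simp add: abs_mult)
      moreover have "a = ((2 * real l - 1) / real L - 1 - s) - (f / fc) * s"
        using sin_nar[OF l(1,2)] by (simp add: a_def algebra_simps)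
      ultimately have aa: "\<bar>a\<bar> \<le> \<delta>" using l(3) \<delta>_def by linarith
      have "Kf N (pi * \<delta>) \<le> Kf N (pi * \<bar>a\<bar>)"
      proof (rule Kf_mono[OF N2])
        show "0 \<le> pi * \<bar>a\<bar>" by simp
        show "pi * \<bar>a\<bar> \<le> pi * \<delta>" using aa by (intro mult_left_mono) auto
        have "pi * \<delta> \<le> pi * (2 / real N)" using True by (intro mult_left_mono) auto
        moreover have "pi * (2 / real N) = 2 * pi / real N" by simp
        ultimately show "pi * \<delta> \<le> 2 * pi / real N" by (simp only:)
      qed
      also have "Kf N (pi * \<bar>a\<bar>) = Kf N (pi * a)"
        using Kf_abs[of N "pi * a"] by (simp add: abs_mult)
      finally show "V \<le> beam_gain N fc f \<phi> (nar_codebook N L l)"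
        unfolding V gain_eq[OF N0] a_def s_def using rN by (simp add: divide_right_mono)
    qed
    also have "\<dots> \<le> M \<phi>" unfolding M_def using l by (intro Max_ge fin) auto
    finally show ?thesis .
  qed
  have up_gen: "wb_gain N fc B \<phi> (nar_codebook N L l) \<le> V"
    if l: "1 \<le> l" "l \<le> L" and c1: "1 / real L \<le> c" and c2: "c \<le> 2 - 1 / real L"
      and arg: "\<And>d. sin (nar_angle L l) - (1 + fc * (d - c) / fc) * sin \<phi> = d \<or>
                    sin (nar_angle L l) - (1 + fc * (d - c) / fc) * sin \<phi> = - d"
    for \<phi> l c
  proof -
    obtain d where d: "c - h \<le> d" "d \<le> c + h"
      "Kf N (pi * d) \<le> (if 1 / real L + h < 2 / real N then Kf N (pi * (1 / real L + h)) else 0)"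
      using low_any[OF N2 LN hpos c1 c2] by blast
    define f where "f = fc * (d - c)"
    have "\<bar>d - c\<bar> \<le> h" using d by linarith
    hence "fc * \<bar>d - c\<bar> \<le> fc * h" using fc0 by (intro mult_left_mono) auto
    moreover have "fc * h = B / 2" using fc0 by (simp add: h_def)
    moreover have "\<bar>f\<bar> = fc * \<bar>d - c\<bar>" using fc0 by (simp add: f_def abs_mult)
    ultimately have "\<bar>f\<bar> \<le> B / 2" by simp
    hence fin: "f \<in> {-B/2..B/2}" by (auto simp: abs_le_iff)
    have "Kf N (pi * (sin (nar_angle L l) - (1 + f / fc) * sin \<phi>)) = Kf N (pi * d)"
      using arg[of d] Kf_uminus[of N "pi * d"] unfolding f_def by auto
    hence "beam_gain N fc f \<phi> (nar_codebook N L l) = Kf N (pi * d) / real N"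
      by (simp add: gain_eq[OF N0])
    also have "\<dots> \<le> V" using d(3) rN unfolding V_def \<delta>_def
      by (auto simp: divide_right_mono divide_nonpos_pos)
    finally show ?thesis using wb_le[OF fin, where N=N and fc=fc and \<phi>=\<phi> and w="nar_codebook N L l"] by linarith
  qed
  have upP: "M (pi/2) \<le> V" unfolding M_def
  proof (subst Max_le_iff[OF fin ne], safe)
    fix l assume l: "l \<in> {1..L}"
    have sl: "sin (nar_angle L l) = (2 * real l - 1) / real L - 1" using l by (intro sin_nar) auto
    show "wb_gain N fc B (pi/2) (nar_codebook N L l) \<le> V"
    proof (rule up_gen[of l "1 - sin (nar_angle L l)"])
      show "1 \<le> l" "l \<le> L" using l by auto
      show "1 / real L \<le> 1 - sin (nar_angle L l)" "1 - sin (nar_angle L l) \<le> 2 - 1 / real L"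
        unfolding sl using l L0 by (auto simp: divide_simps)
      fix d
      show "sin (nar_angle L l) - (1 + fc * (d - (1 - sin (nar_angle L l))) / fc) * sin (pi/2) = d \<or>
            sin (nar_angle L l) - (1 + fc * (d - (1 - sin (nar_angle L l))) / fc) * sin (pi/2) = - d"
        using fc0 by simp
    qed
  qed
  have upM: "M (-pi/2) \<le> V" unfolding M_def
  proof (subst Max_le_iff[OF fin ne], safe)
    fix l assume l: "l \<in> {1..L}"
    have sl: "sin (nar_angle L l) = (2 * real l - 1) / real L - 1" using l by (intro sin_nar) auto
    show "wb_gain N fc B (-pi/2) (nar_codebook N L l) \<le> V"
    proof (rule up_gen[of l "1 + sin (nar_angle L l)"])
      show "1 \<le> l" "l \<le> L" using l by auto
      show "1 / real L \<le> 1 + sin (nar_angle L l)" "1 + sin (nar_angle L l) \<le> 2 - 1 / real L"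
        unfolding sl using l L0 by (auto simp: divide_simps)
      fix d
      show "sin (nar_angle L l) - (1 + fc * (d - (1 + sin (nar_angle L l))) / fc) * sin (-pi/2) = d \<or>
            sin (nar_angle L l) - (1 + fc * (d - (1 + sin (nar_angle L l))) / fc) * sin (-pi/2) = - d"
        using fc0 by simp
    qed
  qed
  have inP: "pi/2 \<in> {-pi/2..pi/2}" "-pi/2 \<in> {-pi/2..pi/2}" by auto
  have G: "gamma_worst N L fc B (nar_codebook N L) = V"
  proof (rule antisym)
    have "gamma_worst N L fc B (nar_codebook N L) \<le> M (pi/2)"
      unfolding gamma_worst_def M_def[symmetric]
    proof (rule cINF_lower[OF _ inP(1)])
      show "bdd_below (M ` {-pi/2..pi/2})"
        by (rule bdd_belowI[of _ V]) (use lower in blast)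
    qed
    thus "gamma_worst N L fc B (nar_codebook N L) \<le> V" using upP by linarith
    show "V \<le> gamma_worst N L fc B (nar_codebook N L)"
      unfolding gamma_worst_def M_def[symmetric] using lower by (intro cINF_greatest) auto
  qed
  have MP: "M (pi/2) = V" using upP lower[OF inP(1)] by linarith
  have MM: "M (-pi/2) = V" using upM lower[OF inP(2)] by linarith
  have dd: "(2 * fc + B * real L) / (4 * fc * real L) = \<delta> / 2"
    using fc0 L0 by (simp add: \<delta>_def h_def field_simps)
  have cond: "(real N < 4 * fc * real L / (2 * fc + B * real L)) = (\<delta> < 2 / real N)"
  proof -
    have e: "2 * fc + B * real L = \<delta> * (2 * fc * real L)"
      using fc0 L0 by (simp add: \<delta>_def h_def field_simps)
    have "4 * fc * real L / (2 * fc + B * real L) = 2 / \<delta>"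
      unfolding e using fc0 L0 dpos by (simp add: field_simps)
    moreover have "(real N < 2 / \<delta>) = (\<delta> < 2 / real N)" using dpos rN
      by (simp add: field_simps mult.commute)
    ultimately show ?thesis by (simp only:)
  qed
  have form: "(sin (real N * pi * (2 * fc + B * real L) / (4 * fc * real L)) /
                  (sqrt (real N) * sin (pi * (2 * fc + B * real L) / (4 * fc * real L))))\<^sup>2
              = Kf N (pi * \<delta>) / real N" if lt: "\<delta> < 2 / real N"
  proof -
    have e1: "real N * pi * (2 * fc + B * real L) / (4 * fc * real L) = real N * (pi * \<delta>) / 2"
      using dd by (metis times_divide_eq_right mult.assoc)
    have e2: "pi * (2 * fc + B * real L) / (4 * fc * real L) = pi * \<delta> / 2"
      using dd by (metis times_divide_eq_right)
    have "\<delta> < 1" using lt rN by (smt (verit) divide_le_eq_1_pos)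
    hence "pi * \<delta> / 2 < pi" using pi_gt_zero by (smt (verit) mult_less_cancel_left1 field_sum_of_halves)
    hence sp: "sin (pi * \<delta> / 2) > 0" using dpos by (intro sin_gt_zero) auto
    show ?thesis unfolding e1 e2 Kf_eq[of "pi * \<delta>" N, OF sp[THEN less_imp_neq, symmetric]]
      using rN by (simp add: power_divide power_mult_distrib)
  qed
  have RHS: "(if real N < 4 * fc * real L / (2 * fc + B * real L)
            then (sin (real N * pi * (2 * fc + B * real L) / (4 * fc * real L)) /
                  (sqrt (real N) * sin (pi * (2 * fc + B * real L) / (4 * fc * real L))))\<^sup>2
            else 0) = V"
    unfolding cond V_def using form by auto
  have last: "B / fc < 4 / real N" if "gamma_worst N L fc B (nar_codebook N L) > 0"
  proof -
    have "\<delta> < 2 / real N" using that G V_def by (auto split: if_splits)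
    hence "h < 2 / real N" using iL0 \<delta>_def by linarith
    thus ?thesis using fc0 by (simp add: h_def field_simps)
  qed
  show ?thesis using G MP MM RHS last unfolding M_def by auto
qed

end
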